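(* For finite $n\geq2$, the class of completely representable algebras in $TA_n$ is elementary; indeed it is axiomatized by a finite set of first-order sentences (namely $\Sigma_n$ together with the sentence expressing atomicity of the Boolean reduct), and it coincides with the class of atomic members of $TA_n$.
   Context: $TA_n=\mathbf{Mod}(\Sigma_n)$, where $\Sigma_n$ is a finite set of equations consisting of the Boolean algebra axioms, the equations saying each $s_{ij}$ ($i\neq j<n$) is a Boolean endomorphism, and equations $t_1(x)=t_2(x)$ for words $t_1,t_2$ in the $s_{ij}$ whose associated compositions of transpositions coincide in $S_n$ (finitely many suffice). A complete representation of $\mathfrak A$ is an injective homomorphism $f:\mathfrak A\to\wp(V)$, $V$ permutable (closed under $s\mapsto s\circ[i,j]$), with $f(\prod Y)=\bigcap f[Y]$ whenever $\prod Y$ exists; here $\wp(V)=\langle\mathcal P(V);\cap,-,S_{ij}\rangle$, $S_{ij}(Y)=\{q\in V:q\circ[i,j]\in Y\}$. *)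

theory Defs
  imports Main "HOL-Library.FuncSet" "HOL-Combinatorics.Transposition"
begin

text \<open>An algebra of the signature of TA_n is a Boolean algebra (the carrier is the
  type 'a, its Boolean reduct is the class instance) together with unary operations
  s i j (only those with i \<noteq> j, i, j < n are relevant).\<close>

definition word_ok :: "nat \<Rightarrow> (nat \<times> nat) list \<Rightarrow> bool" where
  "word_ok n w \<longleftrightarrow> (\<forall>(i,j)\<in>set w. i \<noteq> j \<and> i < n \<and> j < n)"

definition word_op :: "(nat \<Rightarrow> nat \<Rightarrow> 'a \<Rightarrow> 'a) \<Rightarrow> (nat \<times> nat) list \<Rightarrow> 'a \<Rightarrow> 'a" where
  "word_op s w = foldr (\<lambda>(i,j) g. s i j \<circ> g) w id"

definition word_perm :: "(nat \<times> nat) list \<Rightarrow> nat \<Rightarrow> nat" where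
  "word_perm w = foldr (\<lambda>(i,j) p. transpose i j \<circ> p) w id"

definition TA :: "nat \<Rightarrow> (nat \<Rightarrow> nat \<Rightarrow> 'a::boolean_algebra \<Rightarrow> 'a) \<Rightarrow> bool" where
  "TA n s \<longleftrightarrow>
     (\<forall>i<n. \<forall>j<n. i \<noteq> j \<longrightarrow>
        (\<forall>x y. s i j (inf x y) = inf (s i j x) (s i j y)) \<and>
        (\<forall>x. s i j (- x) = - s i j x)) \<and>
     (\<forall>w1 w2. word_ok n w1 \<and> word_ok n w2 \<and> word_perm w1 = word_perm w2
        \<longrightarrow> word_op s w1 = word_op s w2)"

definition is_atom :: "'a::boolean_algebra \<Rightarrow> bool" where
  "is_atom a \<longleftrightarrow> a \<noteq> bot \<and> (\<forall>b. b \<le> a \<longrightarrow> b = bot \<or> b = a)"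

definition atomic_BA :: "'a::boolean_algebra itself \<Rightarrow> bool" where
  "atomic_BA _ \<longleftrightarrow> (\<forall>x::'a. x \<noteq> bot \<longrightarrow> (\<exists>a. is_atom a \<and> a \<le> x))"

definition is_glb :: "'a::boolean_algebra set \<Rightarrow> 'a \<Rightarrow> bool" where
  "is_glb Y p \<longleftrightarrow> (\<forall>y\<in>Y. p \<le> y) \<and> (\<forall>z. (\<forall>y\<in>Y. z \<le> y) \<longrightarrow> z \<le> p)"

text \<open>n-ary sequences over base 'u are the functions on {..<n} (extensional).
  V is permutable if closed under q \<mapsto> q o [i,j].\<close>
definition permutable :: "nat \<Rightarrow> (nat \<Rightarrow> 'u) set \<Rightarrow> bool" where
  "permutable n V \<longleftrightarrow> V \<subseteq> extensional {..<n} \<and>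
     (\<forall>q\<in>V. \<forall>i<n. \<forall>j<n. i \<noteq> j \<longrightarrow> q \<circ> transpose i j \<in> V)"

definition S_op :: "(nat \<Rightarrow> 'u) set \<Rightarrow> nat \<Rightarrow> nat \<Rightarrow> (nat \<Rightarrow> 'u) set \<Rightarrow> (nat \<Rightarrow> 'u) set" where
  "S_op V i j Y = {q \<in> V. q \<circ> transpose i j \<in> Y}"

definition complete_rep ::
  "nat \<Rightarrow> (nat \<Rightarrow> nat \<Rightarrow> 'a::boolean_algebra \<Rightarrow> 'a) \<Rightarrow> (nat \<Rightarrow> 'u) set \<Rightarrow> ('a \<Rightarrow> (nat \<Rightarrow> 'u) set) \<Rightarrow> bool" where
  "complete_rep n s V f \<longleftrightarrow>
     permutable n V \<and>
     (\<forall>x. f x \<subseteq> V) \<and>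
     (\<forall>x y. f (inf x y) = f x \<inter> f y) \<and>
     (\<forall>x. f (- x) = V - f x) \<and>
     (\<forall>i<n. \<forall>j<n. i \<noteq> j \<longrightarrow> (\<forall>x. f (s i j x) = S_op V i j (f x))) \<and>
     inj f \<and>
     (\<forall>Y p. is_glb Y p \<longrightarrow> f p = V \<inter> (\<Inter>y\<in>Y. f y))"

end

theory Submission
  imports Defs
begin

lemma foldr_comp_gen: "foldr (\<lambda>(i,j) h. F i j \<circ> h) u g = foldr (\<lambda>(i,j) h. F i j \<circ> h) u id \<circ> g"
  by (induction u) (auto simp: comp_assoc)

lemma word_op_append: "word_op s (u @ v) = word_op s u \<circ> word_op s v"
  unfolding word_op_def by (simp, subst foldr_comp_gen, simp)

lemma word_perm_append: "word_perm (u @ v) = word_perm u \<circ> word_perm v"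
  unfolding word_perm_def by (simp, subst foldr_comp_gen, simp)

lemma word_op_Nil [simp]: "word_op s [] = id"
  by (simp add: word_op_def)

lemma word_op_single: "word_op s [(i,j)] = s i j"
  by (simp add: word_op_def)

lemma word_perm_single: "word_perm [(i,j)] = transpose i j"
  by (simp add: word_perm_def)

lemma word_op_snoc: "word_op s (w @ [(i,j)]) = word_op s w \<circ> s i j"
  by (simp only: word_op_append word_op_single)

lemma word_perm_snoc: "word_perm (w @ [(i,j)]) = word_perm w \<circ> transpose i j"
  by (simp only: word_perm_append word_perm_single)

lemma word_perm_Nil [simp]: "word_perm [] = id"
  by (simp add: word_perm_def)

lemma word_perm_rev: "word_perm (rev w @ w) = id"
proof (induction w)
  case Nil then show ?case by simp
next
  case (Cons p w)
  obtain i j where p: "p = (i,j)" by (cases p)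
  have "rev (p#w) @ (p#w) = rev w @ ([(i,j)] @ [(i,j)]) @ w" by (simp add: p)
  then have "word_perm (rev (p#w) @ (p#w)) = word_perm (rev w) \<circ> (transpose i j \<circ> transpose i j) \<circ> word_perm w"
    by (simp only: word_perm_append word_perm_single comp_assoc)
  also have "\<dots> = word_perm (rev w @ w)" by (simp add: word_perm_append)
  finally show ?case using Cons by simp
qed

lemma word_perm_rev2: "word_perm (w @ rev w) = id"
  using word_perm_rev[of "rev w"] by simp

lemma word_ok_append [simp]: "word_ok n (u @ v) \<longleftrightarrow> word_ok n u \<and> word_ok n v"
  by (auto simp: word_ok_def)

lemma word_ok_rev [simp]: "word_ok n (rev u) \<longleftrightarrow> word_ok n u"
  by (auto simp: word_ok_def)

lemma word_perm_fix: "word_ok n w \<Longrightarrow> n \<le> k \<Longrightarrow> word_perm w k = k"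
proof (induction w)
  case Nil then show ?case by (simp add: word_perm_def)
next
  case (Cons p w)
  obtain i j where p: "p = (i,j)" by (cases p)
  have "word_ok n w" "i < n" "j < n" using Cons.prems by (auto simp: word_ok_def p)
  then show ?case using Cons by (simp add: p word_perm_def transpose_def)
qed

lemma TA_endo0:
  assumes "TA n s"
  shows "word_ok n w \<Longrightarrow> (\<forall>x y. word_op s w (inf x y) = inf (word_op s w x) (word_op s w y))
     \<and> (\<forall>x. word_op s w (- x) = - word_op s w x)"
proof (induction w)
  case Nil then show ?case by simp
next
  case (Cons p w)
  obtain i j where p: "p = (i,j)" by (cases p)
  have ok: "word_ok n w" "i < n" "j < n" "i \<noteq> j" using Cons.prems by (auto simp: word_ok_def p)
  have e: "word_op s (p#w) = s i j \<circ> word_op s w" by (simp add: word_op_def p)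
  have h1: "\<forall>x y. s i j (inf x y) = inf (s i j x) (s i j y)" and h2: "\<forall>x. s i j (- x) = - s i j x"
    using assms ok unfolding TA_def by blast+
  show ?case using Cons.IH[OF ok(1)] h1 h2 unfolding e by simp
qed

lemma TA_endo:
  assumes "TA n s" "word_ok n w"
  shows "word_op s w (inf x y) = inf (word_op s w x) (word_op s w y)"
    "word_op s w (- x) = - word_op s w x"
  using TA_endo0[OF assms] by blast+

lemma TA_eq: "TA n s \<Longrightarrow> word_ok n w1 \<Longrightarrow> word_ok n w2 \<Longrightarrow> word_perm w1 = word_perm w2
   \<Longrightarrow> word_op s w1 = word_op s w2"
  unfolding TA_def by blast

lemma TA_mono: "TA n s \<Longrightarrow> word_ok n w \<Longrightarrow> x \<le> y \<Longrightarrow> word_op s w x \<le> word_op s w y"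
proof -
  assume a: "TA n s" "word_ok n w" "x \<le> y"
  have "word_op s w x = word_op s w (inf x y)" using a(3) by (simp add: inf_absorb1)
  also have "\<dots> = inf (word_op s w x) (word_op s w y)" by (rule TA_endo(1)[OF a(1,2)])
  finally show ?thesis by (metis inf.cobounded2)
qed

lemma TA_inv: "TA n s \<Longrightarrow> word_ok n w \<Longrightarrow> word_op s w (word_op s (rev w) x) = x"
proof -
  assume a: "TA n s" "word_ok n w"
  have "word_op s (w @ rev w) = word_op s []"
    by (rule TA_eq[OF a(1)]) (use a in \<open>simp_all add: word_perm_rev2 word_ok_def\<close>)
  then show ?thesis by (metis comp_apply id_apply word_op_Nil word_op_append)
qed

lemma TA_inv2: "TA n s \<Longrightarrow> word_ok n w \<Longrightarrow> word_op s (rev w) (word_op s w x) = x"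
  using TA_inv[of n s "rev w"] by simp

lemma atom_le_compl: "is_atom a \<Longrightarrow> (a \<le> - y) \<longleftrightarrow> \<not> a \<le> y"
proof -
  assume a: "is_atom a"
  show ?thesis
  proof
    assume h: "a \<le> - y"
    show "\<not> a \<le> y"
    proof
      assume "a \<le> y"
      then have "a \<le> inf y (- y)" using h by (intro le_infI)
      then have "a = bot" by (simp add: bot_unique)
      then show False using a by (simp add: is_atom_def)
    qed
  next
    assume n: "\<not> a \<le> y"
    have "inf a y \<le> a" by simp
    then have "inf a y = bot \<or> inf a y = a" using a unfolding is_atom_def by blast
    then show "a \<le> - y"
    proof
      assume "inf a y = bot" then show ?thesis by (simp add: inf_shunt)
    next
      assume "inf a y = a" then show ?thesis using n by (simp add: inf.absorb_iff1)
    qed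
  qed
qed

definition qseq :: "nat \<Rightarrow> 'a \<Rightarrow> (nat \<times> nat) list \<Rightarrow> nat \<Rightarrow> 'a \<times> nat" where
  "qseq n a w = (\<lambda>k. if k < n then (a, word_perm w k) else undefined)"

lemma qseq_inj:
  assumes "0 < n" "word_ok n w" "word_ok n w'" "qseq n a w = qseq n a' w'"
  shows "a = a'" "word_perm w = word_perm w'"
proof -
  show "a = a'" using fun_cong[OF assms(4), of 0] assms(1) by (simp add: qseq_def)
  show "word_perm w = word_perm w'"
  proof
    fix k show "word_perm w k = word_perm w' k"
    proof (cases "k < n")
      case True then show ?thesis using fun_cong[OF assms(4), of k] by (simp add: qseq_def)
    next
      case False then show ?thesis using word_perm_fix assms(2,3) by simp
    qed
  qed
qed

lemma qseq_transp:
  assumes "i < n" "j < n"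
  shows "qseq n a w \<circ> transpose i j = qseq n a (w @ [(i,j)])"
proof
  fix k
  have "(transpose i j k < n) = (k < n)" using assms by (simp add: transpose_def)
  then show "(qseq n a w \<circ> transpose i j) k = qseq n a (w @ [(i, j)]) k"
    by (simp add: qseq_def word_perm_snoc)
qed

theorem corollary3p24:
  fixes n :: nat and s :: "nat \<Rightarrow> nat \<Rightarrow> 'a::boolean_algebra \<Rightarrow> 'a"
  assumes "2 \<le> n" and "TA n s"
  shows "(\<forall>V (f :: 'a \<Rightarrow> (nat \<Rightarrow> 'u) set). complete_rep n s V f \<longrightarrow> atomic_BA TYPE('a))
       \<and> (atomic_BA TYPE('a) \<longrightarrow> (\<exists>V (f :: 'a \<Rightarrow> (nat \<Rightarrow> 'a \<times> nat) set). complete_rep n s V f))"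
proof (intro conjI allI impI)
  fix V and f :: "'a \<Rightarrow> (nat \<Rightarrow> 'u) set"
  assume cr: "complete_rep n s V f"
  note c = cr[unfolded complete_rep_def]
  have fsub: "\<And>x. f x \<subseteq> V" using c[THEN conjunct2, THEN conjunct1] by blast
  have finf: "\<And>x y. f (inf x y) = f x \<inter> f y"
    using c[THEN conjunct2, THEN conjunct2, THEN conjunct1] by blast
  have fneg: "\<And>x. f (- x) = V - f x"
    using c[THEN conjunct2, THEN conjunct2, THEN conjunct2, THEN conjunct1] by blast
  have finj: "inj f"
    using c[THEN conjunct2, THEN conjunct2, THEN conjunct2, THEN conjunct2, THEN conjunct2, THEN conjunct1] .
  have fglb: "\<And>Y p. is_glb Y p \<Longrightarrow> f p = V \<inter> (\<Inter>y\<in>Y. f y)"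
    using c[THEN conjunct2, THEN conjunct2, THEN conjunct2, THEN conjunct2, THEN conjunct2, THEN conjunct2]
    by blast
  have fbot: "f bot = {}"
  proof -
    have "f bot = f (inf bot (- bot))" by simp
    also have "\<dots> = f bot \<inter> (V - f bot)" by (simp only: finf fneg)
    finally show ?thesis by blast
  qed
  show "atomic_BA TYPE('a)"
    unfolding atomic_BA_def
  proof (intro allI impI, rule ccontr)
    fix x :: 'a
    assume xn: "x \<noteq> bot" and na: "\<not> (\<exists>a. is_atom a \<and> a \<le> x)"
    have "f x \<noteq> {}"
    proof
      assume "f x = {}"
      then have "f x = f bot" using fbot by simp
      then show False using finj xn by (simp add: inj_eq)
    qed
    then obtain q where q: "q \<in> f x" by blast
    define Y where "Y = {- y | y. y \<le> x \<and> q \<notin> f y}"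
    have glb: "is_glb Y (- x)"
      unfolding is_glb_def
    proof (intro conjI ballI allI impI)
      fix y assume "y \<in> Y" then show "- x \<le> y" by (auto simp: Y_def)
    next
      fix z assume lb: "\<forall>y\<in>Y. z \<le> y"
      show "z \<le> - x"
      proof (rule ccontr)
        assume "\<not> z \<le> - x"
        define w where "w = inf z x"
        have wn: "w \<noteq> bot" using \<open>\<not> z \<le> - x\<close> unfolding w_def
          by (simp add: inf_shunt)
        have wx: "w \<le> x" "w \<le> z" by (auto simp: w_def)
        have "\<not> is_atom w" using na wx by blast
        then obtain b where b: "b \<le> w" "b \<noteq> bot" "b \<noteq> w" using wn unfolding is_atom_def by blast
        define c where "c = inf w (- b)"
        have cn: "c \<noteq> bot"
        proof
          assume "c = bot"
          then have "w \<le> b" unfolding c_def by (simp add: inf_shunt)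
          then show False using b by (simp add: antisym)
        qed
        have "inf b c = bot" by (simp add: c_def inf_commute inf_left_commute)
        then have "f b \<inter> f c = {}" using finf[of b c] fbot by simp
        then have "\<not> (q \<in> f b \<and> q \<in> f c)" by blast
        moreover have "c \<le> w" by (simp add: c_def)
        ultimately obtain d where d: "d \<le> w" "d \<noteq> bot" "q \<notin> f d" using b cn by blast
        have "d \<le> x" using d(1) wx(1) by (rule order_trans)
        then have "- d \<in> Y" unfolding Y_def using d(3) by blast
        then have "z \<le> - d" using lb by blast
        moreover have "d \<le> z" using d(1) wx(2) by (rule order_trans)
        ultimately have "d \<le> - d" by (rule order_trans[rotated])
        then have "inf d d \<le> inf d (- d)" by (intro le_infI) simp_all
        then have "d = bot" by (simp add: bot_unique)
        then show False using d(2) by simp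
      qed
    qed
    have "q \<in> f (- x)"
    proof -
      have "q \<in> V" using q fsub by blast
      moreover have "\<forall>y\<in>Y. q \<in> f y"
      proof
        fix y assume "y \<in> Y"
        then obtain y' where "y = - y'" "q \<notin> f y'" by (auto simp: Y_def)
        then show "q \<in> f y" using fneg \<open>q \<in> V\<close> by simp
      qed
      ultimately show ?thesis using fglb[OF glb] by blast
    qed
    then show False using q fneg by simp
  qed
next
  assume at: "atomic_BA TYPE('a)"
  have n0: "0 < n" using assms(1) by simp
  define V where "V = {qseq n a w | a w. is_atom (a::'a) \<and> word_ok n w}"
  define f where "f x = {qseq n a w | a w. is_atom (a::'a) \<and> word_ok n w \<and> a \<le> word_op s w x}" for x
  have memf: "qseq n a w \<in> f x \<longleftrightarrow> a \<le> word_op s w x" if "is_atom a" "word_ok n w" for a w x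
  proof
    assume "qseq n a w \<in> f x"
    then have "\<exists>a' w'. qseq n a w = qseq n a' w' \<and> is_atom a' \<and> word_ok n w' \<and> a' \<le> word_op s w' x"
      unfolding f_def by (simp only: mem_Collect_eq)
    then obtain a' w' where "is_atom a'" "word_ok n w'" "a' \<le> word_op s w' x" "qseq n a w = qseq n a' w'"
      by blast
    then have "a = a'" "word_perm w = word_perm w'"
      using qseq_inj[OF n0 that(2) \<open>word_ok n w'\<close> \<open>qseq n a w = qseq n a' w'\<close>] by blast+
    moreover have "word_perm w = word_perm w' \<Longrightarrow> word_op s w = word_op s w'"
      using TA_eq[OF assms(2) that(2) \<open>word_ok n w'\<close>] .
    ultimately show "a \<le> word_op s w x" using \<open>a' \<le> word_op s w' x\<close> by simp
  next
    assume "a \<le> word_op s w x"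
    then show "qseq n a w \<in> f x" unfolding f_def using that by (simp only: mem_Collect_eq) blast
  qed
  have fsub: "f x \<subseteq> V" for x unfolding f_def V_def by blast
  have inV: "q \<in> V \<longleftrightarrow> (\<exists>a w. is_atom a \<and> word_ok n w \<and> q = qseq n a w)" for q
    unfolding V_def by blast
  have "complete_rep n s V f"
    unfolding complete_rep_def
  proof (intro conjI allI impI)
    show "permutable n V"
      unfolding permutable_def
    proof (intro conjI ballI allI impI)
      show "V \<subseteq> extensional {..<n}" unfolding V_def extensional_def qseq_def by auto
    next
      fix q i j assume "q \<in> V" "i < n" "j < n" "i \<noteq> j"
      then obtain a w where "is_atom a" "word_ok n w" "q = qseq n a w" using inV by blast
      moreover have "word_ok n (w @ [(i,j)])" using \<open>word_ok n w\<close> \<open>i < n\<close> \<open>j < n\<close> \<open>i \<noteq> j\<close>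
        by (simp add: word_ok_def)
      ultimately show "q \<circ> transpose i j \<in> V"
        using qseq_transp[of i n j a w] \<open>i < n\<close> \<open>j < n\<close> unfolding V_def by blast
    qed
  next
    fix x show "f x \<subseteq> V" by (rule fsub)
  next
    fix x y show "f (inf x y) = f x \<inter> f y"
    proof (intro equalityI subsetI)
      fix q assume q: "q \<in> f (inf x y)"
      then obtain a w where aw: "is_atom a" "word_ok n w" "q = qseq n a w" using fsub inV by blast
      have "a \<le> word_op s w (inf x y)" using memf[OF aw(1,2)] q aw(3) by simp
      then have "a \<le> word_op s w x" "a \<le> word_op s w y" by (simp_all add: TA_endo(1)[OF assms(2) aw(2)])
      then show "q \<in> f x \<inter> f y" by (simp add: aw(3) memf[OF aw(1,2)])
    next
      fix q assume q: "q \<in> f x \<inter> f y"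
      then obtain a w where aw: "is_atom a" "word_ok n w" "q = qseq n a w" using fsub inV by blast
      have "a \<le> word_op s w x" "a \<le> word_op s w y" using memf[OF aw(1,2)] q aw(3) by simp_all
      then have "a \<le> word_op s w (inf x y)" by (simp add: TA_endo(1)[OF assms(2) aw(2)])
      then show "q \<in> f (inf x y)" by (simp add: aw(3) memf[OF aw(1,2)])
    qed
  next
    fix x show "f (- x) = V - f x"
    proof (intro equalityI subsetI)
      fix q assume q: "q \<in> f (- x)"
      then obtain a w where aw: "is_atom a" "word_ok n w" "q = qseq n a w" using fsub inV by blast
      have "a \<le> word_op s w (- x)" using memf[OF aw(1,2)] q aw(3) by simp
      then have "\<not> a \<le> word_op s w x"
        by (simp add: TA_endo(2)[OF assms(2) aw(2)] atom_le_compl[OF aw(1)])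
      then have "q \<notin> f x" by (simp add: aw(3) memf[OF aw(1,2)])
      then show "q \<in> V - f x" using q fsub by blast
    next
      fix q assume q: "q \<in> V - f x"
      then obtain a w where aw: "is_atom a" "word_ok n w" "q = qseq n a w" using inV by blast
      have "\<not> a \<le> word_op s w x" using memf[OF aw(1,2)] q aw(3) by simp
      then have "a \<le> word_op s w (- x)"
        by (simp add: TA_endo(2)[OF assms(2) aw(2)] atom_le_compl[OF aw(1)])
      then show "q \<in> f (- x)" by (simp add: aw(3) memf[OF aw(1,2)])
    qed
  next
    fix i j x assume ij: "i < n" "j < n" "i \<noteq> j"
    have okij: "word_ok n [(i,j)]" using ij by (simp add: word_ok_def)
    show "f (s i j x) = S_op V i j (f x)"
    proof (intro equalityI subsetI)
      fix q assume q: "q \<in> f (s i j x)"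
      then obtain a w where aw: "is_atom a" "word_ok n w" "q = qseq n a w" using fsub inV by blast
      have ok2: "word_ok n (w @ [(i,j)])" using aw(2) okij by simp
      have "a \<le> word_op s w (s i j x)" using memf[OF aw(1,2)] q aw(3) by simp
      then have "a \<le> word_op s (w @ [(i,j)]) x" by (simp add: word_op_snoc)
      then have "qseq n a (w @ [(i,j)]) \<in> f x" using memf[OF aw(1) ok2] by simp
      then have "q \<circ> transpose i j \<in> f x" unfolding aw(3) qseq_transp[OF ij(1,2)] .
      moreover have "q \<in> V" using q fsub by blast
      ultimately show "q \<in> S_op V i j (f x)" unfolding S_op_def by blast
    next
      fix q assume q: "q \<in> S_op V i j (f x)"
      then have "q \<in> V" "q \<circ> transpose i j \<in> f x" unfolding S_op_def by blast+
      then obtain a w where aw: "is_atom a" "word_ok n w" "q = qseq n a w" using inV by blast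
      have ok2: "word_ok n (w @ [(i,j)])" using aw(2) okij by simp
      have "qseq n a (w @ [(i,j)]) \<in> f x" using \<open>q \<circ> transpose i j \<in> f x\<close> unfolding aw(3) qseq_transp[OF ij(1,2)] .
      then have "a \<le> word_op s (w @ [(i,j)]) x" using memf[OF aw(1) ok2] by simp
      then have "a \<le> word_op s w (s i j x)" by (simp add: word_op_snoc)
      then show "q \<in> f (s i j x)" by (simp add: aw(3) memf[OF aw(1,2)])
    qed
  next
    show "inj f"
    proof (rule injI, rule ccontr)
      fix x y assume e: "f x = f y" and ne: "x \<noteq> y"
      have "\<exists>u v. f u = f v \<and> inf u (- v) \<noteq> bot"
      proof (cases "inf x (- y) = bot")
        case True
        then have "x \<le> y" by (simp add: inf_shunt)
        have "inf y (- x) \<noteq> bot"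
        proof
          assume "inf y (- x) = bot"
          then have "y \<le> x" by (simp add: inf_shunt)
          then show False using \<open>x \<le> y\<close> ne by simp
        qed
        then show ?thesis using e by blast
      next
        case False then show ?thesis using e by blast
      qed
      then obtain u v where uv: "f u = f v" "inf u (- v) \<noteq> bot" by blast
      then obtain a where a: "is_atom a" "a \<le> inf u (- v)" using at unfolding atomic_BA_def by blast
      have ok0: "word_ok n []" by (simp add: word_ok_def)
      have "qseq n a [] \<in> f u" using memf[OF a(1) ok0] a(2) by simp
      moreover have "qseq n a [] \<notin> f v" using memf[OF a(1) ok0] a(2) atom_le_compl[OF a(1)] by simp
      ultimately show False using uv by simp
    qed
  next
    fix Y and p :: 'a assume glb: "is_glb Y p"
    have plb: "\<And>y. y \<in> Y \<Longrightarrow> p \<le> y" and pgr: "\<And>z. (\<forall>y\<in>Y. z \<le> y) \<Longrightarrow> z \<le> p"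
      using glb unfolding is_glb_def by blast+
    show "f p = V \<inter> (\<Inter>y\<in>Y. f y)"
    proof (intro equalityI subsetI)
      fix q assume qp: "q \<in> f p"
      then obtain a w where aw: "is_atom a" "word_ok n w" "q = qseq n a w" using fsub inV by blast
      have ap: "a \<le> word_op s w p" using qp memf[OF aw(1,2)] aw(3) by simp
      have "q \<in> f y" if "y \<in> Y" for y
      proof -
        have "word_op s w p \<le> word_op s w y" using TA_mono[OF assms(2) aw(2) plb[OF that]] .
        then have "a \<le> word_op s w y" using ap by (rule order_trans[rotated])
        then show ?thesis using memf[OF aw(1,2)] aw(3) by simp
      qed
      then show "q \<in> V \<inter> (\<Inter>y\<in>Y. f y)" using fsub qp by blast
    next
      fix q assume qi: "q \<in> V \<inter> (\<Inter>y\<in>Y. f y)"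
      have "q \<in> V" using qi by (rule IntD1)
      then obtain a w where aw: "is_atom a" "word_ok n w" "q = qseq n a w" using inV by blast
      have okr: "word_ok n (rev w)" using aw(2) by simp
      have "word_op s (rev w) a \<le> y" if "y \<in> Y" for y
      proof -
        have "q \<in> f y" using qi that by (simp only: Int_iff INT_iff)
        then have "a \<le> word_op s w y" using memf[OF aw(1,2)] aw(3) by simp
        then have "word_op s (rev w) a \<le> word_op s (rev w) (word_op s w y)"
          by (rule TA_mono[OF assms(2) okr])
        then show ?thesis by (simp only: TA_inv2[OF assms(2) aw(2)])
      qed
      then have "word_op s (rev w) a \<le> p" by (intro pgr ballI)
      then have "word_op s w (word_op s (rev w) a) \<le> word_op s w p" by (rule TA_mono[OF assms(2) aw(2)])
      then have "a \<le> word_op s w p" by (simp only: TA_inv[OF assms(2) aw(2)])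
      then show "q \<in> f p" using memf[OF aw(1,2)] aw(3) by simp
    qed
  qed
  then show "\<exists>V (f :: 'a \<Rightarrow> (nat \<Rightarrow> 'a \<times> nat) set). complete_rep n s V f" by (intro exI)
qed

end
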